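(* Let $\ell(t)=\log(1+\exp(-t))$. Let $q$ be a distribution over prompts $\mathbf{x}$ and let $p_{\mathrm{data}}(\cdot\mid\mathbf{x})$ and $p_{\boldsymbol{\theta}_t}(\cdot\mid\mathbf{x})$ be positive conditional distributions over responses. Define the joint densities $p_{+}(\mathbf{y},\mathbf{y}',\mathbf{x})=q(\mathbf{x})\,p_{\mathrm{data}}(\mathbf{y}\mid\mathbf{x})\,p_{\boldsymbol{\theta}_t}(\mathbf{y}'\mid\mathbf{x})$ and $p_{-}(\mathbf{y},\mathbf{y}',\mathbf{x})=q(\mathbf{x})\,p_{\boldsymbol{\theta}_t}(\mathbf{y}\mid\mathbf{x})\,p_{\mathrm{data}}(\mathbf{y}'\mid\mathbf{x})$. Then for every function $f(\mathbf{x},\mathbf{y})$, $$\mathbb{E}_{\mathbf{x}\sim q(\cdot),\,\mathbf{y}\sim p_{\mathrm{data}}(\cdot\mid\mathbf{x}),\,\mathbf{y}'\sim p_{\boldsymbol{\theta}_t}(\cdot\mid\mathbf{x})}\big[\ell\big(f(\mathbf{x},\mathbf{y})-f(\mathbf{x},\mathbf{y}')\big)\big]\ \ge\ \log 2-\mathrm{JSD}(p_{+}\|p_{-}),$$ where $\mathrm{JSD}(p\|q)=\tfrac12\mathrm{KL}\big(p\,\|\,\tfrac{p+q}{2}\big)+\tfrac12\mathrm{KL}\big(q\,\|\,\tfrac{p+q}{2}\big)$ is the Jensen–Shannon divergence. Moreover, the value $\log 2-\mathrm{JSD}(p_{+}\|p_{-})$ is attained by $f^{*}$ if and only if $$f^{*}(\mathbf{x},\mathbf{y})=Z(\mathbf{x})+\log\Big(\frac{p_{\mathrm{data}}(\mathbf{y}\mid\mathbf{x})}{p_{\boldsymbol{\theta}_t}(\mathbf{y}\mid\mathbf{x})}\Big)$$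 for some function $Z(\mathbf{x})$ (possibly depending on $\mathbf{x}$).
   Context: $\mathrm{KL}(\cdot\|\cdot)$ denotes the Kullback–Leibler divergence. *)

theory Defs
  imports "HOL-Probability.Probability"
begin

definition logistic_loss :: "real \<Rightarrow> real" where
  "logistic_loss t = ln (1 + exp (- t))"

definition KL_pmf :: "'a pmf \<Rightarrow> 'a pmf \<Rightarrow> real" where
  "KL_pmf P R = measure_pmf.expectation P (\<lambda>z. ln (pmf P z / pmf R z))"

definition mix_pmf :: "'a pmf \<Rightarrow> 'a pmf \<Rightarrow> 'a pmf" where
  "mix_pmf P Q = bind_pmf (bernoulli_pmf (1/2)) (\<lambda>b. if b then P else Q)"

definition JSD :: "'a pmf \<Rightarrow> 'a pmf \<Rightarrow> real" where
  "JSD P Q = KL_pmf P (mix_pmf P Q) / 2 + KL_pmf Q (mix_pmf P Q) / 2"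

definition p_plus :: "'x pmf \<Rightarrow> ('x \<Rightarrow> 'y pmf) \<Rightarrow> ('x \<Rightarrow> 'y pmf) \<Rightarrow> ('y \<times> 'y \<times> 'x) pmf" where
  "p_plus q pd pt = bind_pmf q (\<lambda>x. bind_pmf (pd x) (\<lambda>y. map_pmf (\<lambda>y'. (y, y', x)) (pt x)))"

definition p_minus :: "'x pmf \<Rightarrow> ('x \<Rightarrow> 'y pmf) \<Rightarrow> ('x \<Rightarrow> 'y pmf) \<Rightarrow> ('y \<times> 'y \<times> 'x) pmf" where
  "p_minus q pd pt = bind_pmf q (\<lambda>x. bind_pmf (pt x) (\<lambda>y. map_pmf (\<lambda>y'. (y, y', x)) (pd x)))"

definition spin_loss :: "'x pmf \<Rightarrow> ('x \<Rightarrow> 'y pmf) \<Rightarrow> ('x \<Rightarrow> 'y pmf) \<Rightarrow> ('x \<Rightarrow> 'y \<Rightarrow> real) \<Rightarrow> ennreal" where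
  "spin_loss q pd pt f =
     (\<integral>\<^sup>+ x. \<integral>\<^sup>+ y. \<integral>\<^sup>+ y'. ennreal (logistic_loss (f x y - f x y')) \<partial>measure_pmf (pt x) \<partial>measure_pmf (pd x) \<partial>measure_pmf q)"

end

theory Submission
  imports Defs
begin


lemma pmf_mix: "pmf (mix_pmf P Q) z = (pmf P z + pmf Q z) / 2"
  unfolding mix_pmf_def by (simp add: pmf_bind)

lemma pmf_map_triple:
  "pmf (map_pmf (\<lambda>y'. (y0, y', x0)) M) (y, y', x) = (if y0 = y \<and> x0 = x then pmf M y' else 0)"
proof (cases "y0 = y \<and> x0 = x")
  case True
  have "inj (\<lambda>y'. (y0, y', x0))" by (auto simp: inj_def)
  then show ?thesis using True pmf_map_inj'[of "\<lambda>y'. (y0, y', x0)" M y'] by simp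
next
  case False
  then have "(y, y', x) \<notin> set_pmf (map_pmf (\<lambda>y'. (y0, y', x0)) M)" by auto
  then have "pmf (map_pmf (\<lambda>y'. (y0, y', x0)) M) (y, y', x) = 0" by (simp only: set_pmf_iff) simp
  with False show ?thesis by auto
qed

lemma pmf_bind_single:
  assumes that: "\<And>u. u \<noteq> uu \<Longrightarrow> pmf (N u) z = 0"
  shows "pmf (bind_pmf M N) z = pmf M uu * pmf (N uu) z"
proof -
  have "pmf (bind_pmf M N) z = (\<integral>u. pmf (N u) z \<partial>M)" by (rule pmf_bind)
  also have "\<dots> = (\<integral>u. pmf (N uu) z * indicator {uu} u \<partial>M)"
    by (rule Bochner_Integration.integral_cong) (auto simp: that split: split_indicator)
  also have "\<dots> = pmf (N uu) z * measure M {uu}" by simp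
  finally show ?thesis by (simp add: measure_pmf_single)
qed

lemma pmf_p_plus: "pmf (p_plus q pd pt) (y, y', x) = pmf q x * (pmf (pd x) y * pmf (pt x) y')"
  unfolding p_plus_def
  apply (subst pmf_bind_single[where uu = x])
   apply (subst pmf_bind_single[where uu = y])
    apply (simp add: pmf_map_triple)
   apply (simp add: pmf_map_triple)
  apply (subst pmf_bind_single[where uu = y])
   apply (simp add: pmf_map_triple)
  apply (simp add: pmf_map_triple)
  done

lemma pmf_p_minus: "pmf (p_minus q pd pt) (y, y', x) = pmf q x * (pmf (pt x) y * pmf (pd x) y')"
  unfolding p_minus_def
  apply (subst pmf_bind_single[where uu = x])
   apply (subst pmf_bind_single[where uu = y])
    apply (simp add: pmf_map_triple)
   apply (simp add: pmf_map_triple)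
  apply (subst pmf_bind_single[where uu = y])
   apply (simp add: pmf_map_triple)
  apply (simp add: pmf_map_triple)
  done

lemma spin_alt: "spin_loss q pd pt f = (\<integral>\<^sup>+ z. ennreal (logistic_loss (f (snd (snd z)) (fst z) - f (snd (snd z)) (fst (snd z)))) \<partial>measure_pmf (p_plus q pd pt))"
  unfolding spin_loss_def p_plus_def by simp

lemma p_minus_swap: "p_minus q pd pt = map_pmf (\<lambda>(y, y', x). (y', y, x)) (p_plus q pd pt)"
proof (rule pmf_eqI)
  fix z :: "'a \<times> 'a \<times> 'b"
  obtain y y' x where z: "z = (y, y', x)" by (cases z) auto
  have inj: "inj (\<lambda>(y::'a, y'::'a, x::'b). (y', y, x))" by (auto simp: inj_def)
  have "z = (\<lambda>(y, y', x). (y', y, x)) (y', y, x)" using z by simp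
  then have "pmf (map_pmf (\<lambda>(y, y', x). (y', y, x)) (p_plus q pd pt)) z = pmf (p_plus q pd pt) (y', y, x)"
    using pmf_map_inj'[OF inj] by metis
  then show "pmf (p_minus q pd pt) z = pmf (map_pmf (\<lambda>(y, y', x). (y', y, x)) (p_plus q pd pt)) z"
    using z by (simp add: pmf_p_plus pmf_p_minus mult_ac)
qed


lemma KL_part:
  fixes P Q :: "'a pmf"
  shows "0 \<le> ln 2 - KL_pmf P (mix_pmf P Q)"
    and "ennreal (ln 2 - KL_pmf P (mix_pmf P Q)) =
         (\<integral>\<^sup>+ z. ennreal (pmf P z * ln ((pmf P z + pmf Q z) / pmf P z)) \<partial>count_space UNIV)"
proof -
  define L where "L = (\<lambda>z. ln 2 - ln (pmf P z / pmf (mix_pmf P Q) z))"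
  have Lnn: "0 \<le> L z" for z
  proof (cases "pmf P z = 0")
    case True then show ?thesis by (simp add: L_def)
  next
    case False
    then have a: "pmf P z > 0" using pmf_nonneg[of P z] by linarith
    have b: "pmf Q z \<ge> 0" by simp
    have "pmf P z / pmf (mix_pmf P Q) z = 2 * pmf P z / (pmf P z + pmf Q z)"
      by (simp add: pmf_mix)
    also have "\<dots> \<le> 2" using a b using a b by (simp add: divide_le_eq not_less)
    finally have le: "pmf P z / pmf (mix_pmf P Q) z \<le> 2" .
    have ab: "pmf P z + pmf Q z > 0" using a b by linarith
    have pos: "pmf P z / pmf (mix_pmf P Q) z > 0" using a ab by (simp add: pmf_mix)
    show ?thesis using ln_le_cancel_iff[OF pos, of 2] le by (simp add: L_def)
  qed
  have key: "pmf P z * L z = pmf P z * ln ((pmf P z + pmf Q z) / pmf P z)" for z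
  proof (cases "pmf P z = 0")
    case True then show ?thesis by simp
  next
    case False
    then have a: "pmf P z > 0" using pmf_nonneg[of P z] by linarith
    have b: "pmf Q z \<ge> 0" by simp
    have "L z = ln 2 - ln (2 * pmf P z / (pmf P z + pmf Q z))"
      by (simp add: L_def pmf_mix mult.commute)
    also have "\<dots> = ln ((pmf P z + pmf Q z) / pmf P z)"
    proof -
      have ab: "pmf P z + pmf Q z > 0" using a b by linarith
      have "ln (2 * pmf P z / (pmf P z + pmf Q z)) = ln 2 + ln (pmf P z) - ln (pmf P z + pmf Q z)"
        using a ab by (simp add: ln_div ln_mult)
      moreover have "ln ((pmf P z + pmf Q z) / pmf P z) = ln (pmf P z + pmf Q z) - ln (pmf P z)"
        using a ab by (simp add: ln_div)
      ultimately show ?thesis by simp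
    qed
    finally show ?thesis by simp
  qed
  have bound: "pmf P z * ln ((pmf P z + pmf Q z) / pmf P z) \<le> pmf Q z" for z
  proof (cases "pmf P z = 0")
    case True then show ?thesis by simp
  next
    case False
    then have a: "pmf P z > 0" using pmf_nonneg[of P z] by linarith
    have b: "pmf Q z \<ge> 0" by simp
    have "ln ((pmf P z + pmf Q z) / pmf P z) \<le> (pmf P z + pmf Q z) / pmf P z - 1"
      using a add_pos_nonneg[OF a b] by (intro ln_le_minus_one) simp
    also have "\<dots> = pmf Q z / pmf P z" using a by (simp add: field_simps)
    finally show ?thesis using a by (simp add: field_simps)
  qed
  have nnL: "(\<integral>\<^sup>+ z. ennreal (L z) \<partial>measure_pmf P) =
        (\<integral>\<^sup>+ z. ennreal (pmf P z * ln ((pmf P z + pmf Q z) / pmf P z)) \<partial>count_space UNIV)"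
    by (simp add: nn_integral_measure_pmf ennreal_mult'[symmetric] key Lnn)
  have "(\<integral>\<^sup>+ z. ennreal (pmf P z * ln ((pmf P z + pmf Q z) / pmf P z)) \<partial>count_space UNIV)
        \<le> (\<integral>\<^sup>+ z. ennreal (pmf Q z) \<partial>count_space UNIV)"
    by (intro nn_integral_mono) (simp add: bound)
  also have "\<dots> = (\<integral>\<^sup>+ z. 1 \<partial>measure_pmf Q)"
    unfolding nn_integral_measure_pmf by simp
  also have "\<dots> = 1" by simp
  finally have le1: "(\<integral>\<^sup>+ z. ennreal (pmf P z * ln ((pmf P z + pmf Q z) / pmf P z)) \<partial>count_space UNIV) \<le> 1" .
  have fin: "(\<integral>\<^sup>+ z. ennreal (L z) \<partial>measure_pmf P) < \<infinity>"
    unfolding nnL by (rule le_less_trans[OF le1]) simp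
  have int: "integrable (measure_pmf P) L"
    by (rule integrableI_bounded) (use fin Lnn in auto)
  have "KL_pmf P (mix_pmf P Q) = (\<integral>z. ln 2 - L z \<partial>measure_pmf P)"
    by (simp add: KL_pmf_def L_def)
  also have "\<dots> = ln 2 - (\<integral>z. L z \<partial>measure_pmf P)"
    using int by (subst Bochner_Integration.integral_diff) auto
  finally have KL: "ln 2 - KL_pmf P (mix_pmf P Q) = (\<integral>z. L z \<partial>measure_pmf P)" by simp
  show "0 \<le> ln 2 - KL_pmf P (mix_pmf P Q)" unfolding KL using Lnn by (simp add: integral_nonneg)
  show "ennreal (ln 2 - KL_pmf P (mix_pmf P Q)) =
         (\<integral>\<^sup>+ z. ennreal (pmf P z * ln ((pmf P z + pmf Q z) / pmf P z)) \<partial>count_space UNIV)"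
    unfolding KL nnL[symmetric] using int Lnn by (subst nn_integral_eq_integral) auto
qed


lemma ln_strict: "0 < (x::real) \<Longrightarrow> x \<noteq> 1 \<Longrightarrow> ln x < x - 1"
  using ln_diff_less[of x 1] by simp

lemma pointwise:
  fixes a b t :: real
  assumes a: "a > 0" and b: "b > 0"
  shows "a * ln ((a + b) / a) + b * ln ((a + b) / b) \<le> a * logistic_loss t + b * logistic_loss (- t)"
    and "a * logistic_loss t + b * logistic_loss (- t) = a * ln ((a + b) / a) + b * ln ((a + b) / b)
         \<longleftrightarrow> t = ln (a / b)"
proof -
  define e where "e = exp (- t)"
  have e: "e > 0" by (simp add: e_def)
  have l1: "logistic_loss t = ln (1 + e)" by (simp add: logistic_loss_def e_def)
  have l2: "logistic_loss (- t) = ln (1 + e) - ln e"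
  proof -
    have "1 + exp t = (1 + e) / e" using e by (simp add: e_def exp_minus field_simps)
    then show ?thesis using e by (simp add: logistic_loss_def ln_div)
  qed
  define u1 where "u1 = (a + b) / (a * (1 + e))"
  define u2 where "u2 = e * (a + b) / (b * (1 + e))"
  have u1: "u1 > 0" using a b e by (simp add: u1_def)
  have u2: "u2 > 0" using a b e by (simp add: u2_def)
  have lnu1: "ln u1 = ln (a + b) - ln a - ln (1 + e)"
    using a b e by (simp add: u1_def ln_div ln_mult)
  have lnu2: "ln u2 = ln e + ln (a + b) - ln b - ln (1 + e)"
    using a b e by (simp add: u2_def ln_div ln_mult)
  have D: "a * logistic_loss t + b * logistic_loss (- t) - (a * ln ((a + b) / a) + b * ln ((a + b) / b))
        = - (a * ln u1 + b * ln u2)"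
    using a b by (simp add: l1 l2 lnu1 lnu2 ln_div algebra_simps)
  have pe: "1 + e > 0" using e by simp
  have au1: "a * u1 = (a + b) / (1 + e)" using a by (simp add: u1_def)
  have bu2: "b * u2 = e * (a + b) / (1 + e)" using b by (simp add: u2_def)
  have sum: "(a + b) / (1 + e) + e * (a + b) / (1 + e) = a + b"
  proof -
    have "(a + b) / (1 + e) + e * (a + b) / (1 + e) = ((a + b) * (1 + e)) / (1 + e)"
      by (simp add: add_divide_distrib[symmetric] algebra_simps)
    also have "\<dots> = a + b" using pe by simp
    finally show ?thesis .
  qed
  have S: "a * (u1 - 1) + b * (u2 - 1) = 0"
    using au1 bu2 sum by (simp add: algebra_simps)
  have i1: "a * ln u1 \<le> a * (u1 - 1)" using a u1 ln_le_minus_one[OF u1] by simp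
  have i2: "b * ln u2 \<le> b * (u2 - 1)" using b u2 ln_le_minus_one[OF u2] by simp
  show "a * ln ((a + b) / a) + b * ln ((a + b) / b) \<le> a * logistic_loss t + b * logistic_loss (- t)"
    using D S i1 i2 by linarith
  have u1eq: "u1 = 1 \<longleftrightarrow> t = ln (a / b)"
  proof
    assume "u1 = 1"
    then have "a + b = a * (1 + e)" using a e by (simp add: u1_def field_simps)
    then have "e = b / a" using a by (simp add: field_simps)
    then have "exp (- t) = b / a" by (simp add: e_def)
    then have "- t = ln (b / a)" using a b by (metis ln_exp)
    then show "t = ln (a / b)" using a b by (simp add: ln_div)
  next
    assume "t = ln (a / b)"
    then have "e = b / a" using a b by (simp add: e_def exp_minus)
    then show "u1 = 1" using a b by (simp add: u1_def field_simps)
  qed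
  show "a * logistic_loss t + b * logistic_loss (- t) = a * ln ((a + b) / a) + b * ln ((a + b) / b)
         \<longleftrightarrow> t = ln (a / b)"
  proof
    assume eq: "a * logistic_loss t + b * logistic_loss (- t) = a * ln ((a + b) / a) + b * ln ((a + b) / b)"
    show "t = ln (a / b)"
    proof (rule ccontr)
      assume "t \<noteq> ln (a / b)"
      then have "u1 \<noteq> 1" using u1eq by simp
      then have "a * ln u1 < a * (u1 - 1)" using a ln_strict[OF u1] by simp
      then show False using D S i2 eq by linarith
    qed
  next
    assume "t = ln (a / b)"
    then have "u1 = 1" using u1eq by simp
    then have "u2 = 1" using S a b by (simp add: field_simps)
    then show "a * logistic_loss t + b * logistic_loss (- t) = a * ln ((a + b) / a) + b * ln ((a + b) / b)"
      using D \<open>u1 = 1\<close> by simp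
  qed
qed


lemma ll_nn: "0 \<le> logistic_loss t"
  unfolding logistic_loss_def by (simp add: add_pos_pos)

lemma hterm_nn: "0 \<le> (a::real) \<Longrightarrow> 0 \<le> b \<Longrightarrow> 0 \<le> a * ln ((a + b) / a)"
proof (cases "a = 0")
  case False
  assume "0 \<le> a" "0 \<le> b"
  then have "a > 0" using False by simp
  moreover have "1 \<le> (a + b) / a" using \<open>a > 0\<close> \<open>0 \<le> b\<close> by (simp add: field_simps)
  ultimately show ?thesis by simp
qed simp

lemma double_le: "(x::ennreal) + x \<le> y + y \<Longrightarrow> x \<le> y"
proof -
  assume "x + x \<le> y + y"
  then have "2 * x \<le> 2 * y" by (simp add: mult_2)
  then show "x \<le> y" by (subst (asm) ennreal_mult_le_mult_iff) auto
qed

lemma cancel_zero: "(u::ennreal) + w = w \<Longrightarrow> w \<noteq> \<top> \<Longrightarrow> u = 0"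
proof -
  assume h: "u + w = w" "w \<noteq> \<top>"
  then have "w + u = w + 0" by (simp add: add.commute)
  then show "u = 0" using h(2) ennreal_add_left_cancel[of w u 0] by simp
qed

lemma ln_ratio:
  assumes "(c::real) > 0" "p1 > 0" "t1 > 0" "p2 > 0" "t2 > 0"
  shows "ln ((c * (p1 * t2)) / (c * (t1 * p2))) = ln (p1 / t1) - ln (p2 / t2)"
proof -
  have "(c * (p1 * t2)) / (c * (t1 * p2)) = (p1 / t1) / (p2 / t2)" using assms by (simp add: field_simps)
  then show ?thesis using assms by (simp add: ln_div ln_mult)
qed



lemma hterm_nn2: "0 \<le> (a::real) \<Longrightarrow> 0 \<le> b \<Longrightarrow> 0 \<le> b * ln ((a + b) / b)"
  using hterm_nn[of b a] by (simp add: add.commute)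

theorem lemmaC2:
  fixes q :: "'x pmf" and pd pt :: "'x \<Rightarrow> 'y pmf"
  assumes pd_pos: "\<And>x y. pmf (pd x) y > 0"
      and pt_pos: "\<And>x y. pmf (pt x) y > 0"
  shows "(\<forall>f. spin_loss q pd pt f \<ge> ennreal (ln 2 - JSD (p_plus q pd pt) (p_minus q pd pt)))
       \<and> (\<forall>f. spin_loss q pd pt f = ennreal (ln 2 - JSD (p_plus q pd pt) (p_minus q pd pt))
               \<longleftrightarrow> (\<exists>Z. \<forall>x \<in> set_pmf q. \<forall>y. f x y = Z x + ln (pmf (pd x) y / pmf (pt x) y)))"
proof -
  define P where "P = p_plus q pd pt"
  define Q where "Q = p_minus q pd pt"
  define V where "V = ennreal (ln 2 - JSD P Q)"
  define h where "h = (\<lambda>z. pmf P z * ln ((pmf P z + pmf Q z) / pmf P z) + pmf Q z * ln ((pmf P z + pmf Q z) / pmf Q z))"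
  define g where "g = (\<lambda>(f::'x \<Rightarrow> 'y \<Rightarrow> real) (z::'y \<times> 'y \<times> 'x). f (snd (snd z)) (fst z) - f (snd (snd z)) (fst (snd z)))"
  define F where "F = (\<lambda>f z. pmf P z * logistic_loss (g f z) + pmf Q z * logistic_loss (- g f z))"
  define sw where "sw = (\<lambda>(y::'y, y'::'y, x::'x). (y', y, x))"
  have h_nn: "0 \<le> h z" for z
    unfolding h_def by (intro add_nonneg_nonneg hterm_nn hterm_nn2) auto
  have F_nn: "0 \<le> F f z" for f z
    unfolding F_def by (intro add_nonneg_nonneg mult_nonneg_nonneg ll_nn) auto
  have mixsym: "mix_pmf Q P = mix_pmf P Q"
    by (rule pmf_eqI) (simp add: pmf_mix add.commute)
  have K1: "0 \<le> ln 2 - KL_pmf P (mix_pmf P Q)"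
    and E1: "ennreal (ln 2 - KL_pmf P (mix_pmf P Q)) =
         (\<integral>\<^sup>+ z. ennreal (pmf P z * ln ((pmf P z + pmf Q z) / pmf P z)) \<partial>count_space UNIV)"
    by (rule KL_part)+
  have K2: "0 \<le> ln 2 - KL_pmf Q (mix_pmf P Q)"
    and E2: "ennreal (ln 2 - KL_pmf Q (mix_pmf P Q)) =
         (\<integral>\<^sup>+ z. ennreal (pmf Q z * ln ((pmf P z + pmf Q z) / pmf Q z)) \<partial>count_space UNIV)"
    using KL_part[of Q P] by (simp_all add: mixsym add.commute)
  have VV: "V + V = (\<integral>\<^sup>+ z. ennreal (h z) \<partial>count_space UNIV)"
  proof -
    have "V + V = ennreal ((ln 2 - KL_pmf P (mix_pmf P Q)) + (ln 2 - KL_pmf Q (mix_pmf P Q)))"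
    proof -
      have r: "(ln 2 - JSD P Q) + (ln 2 - JSD P Q) = (ln 2 - KL_pmf P (mix_pmf P Q)) + (ln 2 - KL_pmf Q (mix_pmf P Q))"
        by (simp add: JSD_def field_simps)
      have nn: "0 \<le> ln 2 - JSD P Q" using K1 K2 by (simp add: JSD_def field_simps)
      have "V + V = ennreal ((ln 2 - JSD P Q) + (ln 2 - JSD P Q))"
        unfolding V_def using ennreal_plus[OF nn nn] by simp
      then show ?thesis using r by simp
    qed
    also have "\<dots> = ennreal (ln 2 - KL_pmf P (mix_pmf P Q)) + ennreal (ln 2 - KL_pmf Q (mix_pmf P Q))"
      using ennreal_plus[OF K1 K2] by simp
    also have "\<dots> = (\<integral>\<^sup>+ z. ennreal (pmf P z * ln ((pmf P z + pmf Q z) / pmf P z)) + 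
                        ennreal (pmf Q z * ln ((pmf P z + pmf Q z) / pmf Q z)) \<partial>count_space UNIV)"
      unfolding E1 E2 by (rule nn_integral_add[symmetric]) auto
    also have "\<dots> = (\<integral>\<^sup>+ z. ennreal (h z) \<partial>count_space UNIV)"
      unfolding h_def by (intro nn_integral_cong, subst ennreal_plus) (auto intro: hterm_nn hterm_nn2)
    finally show ?thesis .
  qed
  have SS: "spin_loss q pd pt f + spin_loss q pd pt f = (\<integral>\<^sup>+ z. ennreal (F f z) \<partial>count_space UNIV)" for f
  proof -
    have s1: "spin_loss q pd pt f = (\<integral>\<^sup>+ z. ennreal (pmf P z * logistic_loss (g f z)) \<partial>count_space UNIV)"
      unfolding spin_alt nn_integral_measure_pmf P_def[symmetric]
      by (intro nn_integral_cong) (simp add: g_def ennreal_mult ll_nn)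
    have gsw: "g f (sw z) = - g f z" for z
      by (cases z) (simp add: g_def sw_def)
    have "spin_loss q pd pt f = (\<integral>\<^sup>+ z. ennreal (logistic_loss (g f z)) \<partial>measure_pmf P)"
      unfolding spin_alt P_def g_def by simp
    also have "\<dots> = (\<integral>\<^sup>+ z. ennreal (logistic_loss (- g f z)) \<partial>measure_pmf Q)"
      unfolding Q_def p_minus_swap P_def[symmetric] sw_def[symmetric] nn_integral_map_pmf
      by (simp add: gsw)
    also have "\<dots> = (\<integral>\<^sup>+ z. ennreal (pmf Q z * logistic_loss (- g f z)) \<partial>count_space UNIV)"
      unfolding nn_integral_measure_pmf
      by (intro nn_integral_cong) (simp add: ennreal_mult ll_nn)
    finally have s2: "spin_loss q pd pt f = \<dots>" .
    have "spin_loss q pd pt f + spin_loss q pd pt f =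
        (\<integral>\<^sup>+ z. ennreal (pmf P z * logistic_loss (g f z)) + ennreal (pmf Q z * logistic_loss (- g f z)) \<partial>count_space UNIV)"
      by (subst s1, subst s2, rule nn_integral_add[symmetric]) auto
    also have "\<dots> = (\<integral>\<^sup>+ z. ennreal (F f z) \<partial>count_space UNIV)"
      unfolding F_def by (intro nn_integral_cong, subst ennreal_plus) (auto intro: ll_nn mult_nonneg_nonneg)
    finally show ?thesis .
  qed
  have ab_pos: "pmf P (y, y', x) > 0 \<and> pmf Q (y, y', x) > 0" if "x \<in> set_pmf q" for x y y'
  proof -
    have "pmf q x > 0" using that by (simp add: set_pmf_iff order.not_eq_order_implies_strict)
    then show ?thesis using pd_pos pt_pos by (simp add: P_def Q_def pmf_p_plus pmf_p_minus)
  qed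
  have ab_zero: "pmf P (y, y', x) = 0 \<and> pmf Q (y, y', x) = 0" if "x \<notin> set_pmf q" for x y y'
    using that by (simp add: P_def Q_def pmf_p_plus pmf_p_minus set_pmf_iff)
  have ratio: "ln (pmf P (y, y', x) / pmf Q (y, y', x)) =
      ln (pmf (pd x) y / pmf (pt x) y) - ln (pmf (pd x) y' / pmf (pt x) y')" if "x \<in> set_pmf q" for x y y'
  proof -
    have "pmf q x > 0" using that by (simp add: set_pmf_iff order.not_eq_order_implies_strict)
    then show ?thesis unfolding P_def Q_def pmf_p_plus pmf_p_minus
      by (intro ln_ratio pd_pos pt_pos)
  qed
  have hF: "h z \<le> F f z" for f z
  proof -
    obtain y y' x where z: "z = (y, y', x)" by (cases z) auto
    show ?thesis
    proof (cases "x \<in> set_pmf q")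
      case True
      then show ?thesis using pointwise(1)[of "pmf P z" "pmf Q z" "g f z"] ab_pos[OF True] z
        by (simp add: h_def F_def)
    next
      case False
      then show ?thesis using ab_zero[OF False] z by (simp add: h_def F_def)
    qed
  qed
  have Fh_iff: "(\<forall>z. F f z = h z) \<longleftrightarrow> (\<exists>Z. \<forall>x \<in> set_pmf q. \<forall>y. f x y = Z x + ln (pmf (pd x) y / pmf (pt x) y))" for f
  proof
    assume all: "\<forall>z. F f z = h z"
    have eq: "f x y - f x y' = ln (pmf (pd x) y / pmf (pt x) y) - ln (pmf (pd x) y' / pmf (pt x) y')"
      if "x \<in> set_pmf q" for x y y'
    proof -
      have "g f (y, y', x) = ln (pmf P (y, y', x) / pmf Q (y, y', x))"
        using pointwise(2)[of "pmf P (y, y', x)" "pmf Q (y, y', x)" "g f (y, y', x)"] ab_pos[OF that] all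
        by (simp add: h_def F_def)
      then show ?thesis using ratio[OF that] by (simp add: g_def)
    qed
    show "\<exists>Z. \<forall>x \<in> set_pmf q. \<forall>y. f x y = Z x + ln (pmf (pd x) y / pmf (pt x) y)"
      by (rule exI[of _ "\<lambda>x. f x undefined - ln (pmf (pd x) undefined / pmf (pt x) undefined)"])
         (use eq in \<open>fastforce simp: algebra_simps\<close>)
  next
    assume "\<exists>Z. \<forall>x \<in> set_pmf q. \<forall>y. f x y = Z x + ln (pmf (pd x) y / pmf (pt x) y)"
    then obtain Z where Z: "\<And>x y. x \<in> set_pmf q \<Longrightarrow> f x y = Z x + ln (pmf (pd x) y / pmf (pt x) y)" by blast
    show "\<forall>z. F f z = h z"
    proof
      fix z :: "'y \<times> 'y \<times> 'x"
      obtain y y' x where z: "z = (y, y', x)" by (cases z) auto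
      show "F f z = h z"
      proof (cases "x \<in> set_pmf q")
        case True
        have "g f z = ln (pmf P z / pmf Q z)"
          using ratio[OF True, of y y'] Z[OF True, of y] Z[OF True, of y'] z by (simp add: g_def)
        then show ?thesis using pointwise(2)[of "pmf P z" "pmf Q z" "g f z"] ab_pos[OF True] z
          by (simp add: h_def F_def)
      next
        case False
        then show ?thesis using ab_zero[OF False] z by (simp add: h_def F_def)
      qed
    qed
  qed
  have Vfin: "V \<noteq> \<top>" by (simp add: V_def)
  have part1: "V \<le> spin_loss q pd pt f" for f
  proof (rule double_le)
    show "V + V \<le> spin_loss q pd pt f + spin_loss q pd pt f"
      unfolding VV SS by (intro nn_integral_mono) (simp add: hF ennreal_leI)
  qed
  have part2: "spin_loss q pd pt f = V \<longleftrightarrow> (\<forall>z. F f z = h z)" for f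
  proof
    assume eqV: "spin_loss q pd pt f = V"
    have intF: "(\<integral>\<^sup>+ z. ennreal (F f z) \<partial>count_space UNIV) = (\<integral>\<^sup>+ z. ennreal (h z) \<partial>count_space UNIV)"
      by (simp only: SS[symmetric] eqV VV[symmetric])
    have hfin: "(\<integral>\<^sup>+ z. ennreal (h z) \<partial>count_space UNIV) \<noteq> \<top>"
      unfolding VV[symmetric] using Vfin by simp
    have "(\<integral>\<^sup>+ z. ennreal (F f z) \<partial>count_space UNIV) =
        (\<integral>\<^sup>+ z. ennreal (F f z - h z) + ennreal (h z) \<partial>count_space UNIV)"
      by (intro nn_integral_cong, subst ennreal_plus[symmetric]) (auto simp: hF h_nn)
    also have "\<dots> = (\<integral>\<^sup>+ z. ennreal (F f z - h z) \<partial>count_space UNIV) + (\<integral>\<^sup>+ z. ennreal (h z) \<partial>count_space UNIV)"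
      by (rule nn_integral_add) auto
    finally have c: "(\<integral>\<^sup>+ z. ennreal (F f z) \<partial>count_space UNIV) = (\<integral>\<^sup>+ z. ennreal (F f z - h z) \<partial>count_space UNIV) + (\<integral>\<^sup>+ z. ennreal (h z) \<partial>count_space UNIV)" .
    have "(\<integral>\<^sup>+ z. ennreal (F f z - h z) \<partial>count_space UNIV) + (\<integral>\<^sup>+ z. ennreal (h z) \<partial>count_space UNIV) = (\<integral>\<^sup>+ z. ennreal (h z) \<partial>count_space UNIV)"
      using trans[OF sym[OF c] intF] .
    from cancel_zero[OF this hfin]
    have "(\<integral>\<^sup>+ z. ennreal (F f z - h z) \<partial>count_space UNIV) = 0" .
    then have "AE z in count_space UNIV. ennreal (F f z - h z) = 0"
      by (subst (asm) nn_integral_0_iff_AE) auto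
    then have "\<forall>z. ennreal (F f z - h z) = 0" by (simp add: AE_count_space)
    then have "\<forall>z. F f z - h z \<le> 0" by (simp only: ennreal_eq_0_iff) simp
    then show "\<forall>z. F f z = h z" using hF by (meson antisym diff_le_0_iff_le)
  next
    assume Fh: "\<forall>z. F f z = h z"
    have e: "spin_loss q pd pt f + spin_loss q pd pt f = V + V" unfolding SS VV
      by (intro nn_integral_cong) (simp only: Fh[rule_format])
    have "spin_loss q pd pt f \<le> V" by (rule double_le) (simp add: e)
    then show "spin_loss q pd pt f = V" using part1[of f] by (rule antisym)
  qed
  show ?thesis
    unfolding P_def[symmetric] Q_def[symmetric] V_def[symmetric]
  proof (intro conjI allI)
    fix f
    show "V \<le> spin_loss q pd pt f" by (rule part1)
    show "spin_loss q pd pt f = V \<longleftrightarrow> (\<exists>Z. \<forall>x \<in> set_pmf q. \<forall>y. f x y = Z x + ln (pmf (pd x) y / pmf (pt x) y))"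
      by (rule trans[OF part2 Fh_iff])
  qed
qed

end
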